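(* Suppose Assumption 1, Assumption 5 and Assumption 6 (below) hold. Then $\sqrt n(\widehat x_1^*-x_1^* )=O_p(1)$. Assumption 1: for $t\in\{1,2\}$, $Y_t(x)=g_t(U_t(x))$ where for all $(x,v)\in\mathcal X\times[0,1]$ the conditional law of $U_t(x)$ given $V_t=v$ does not depend on $t$. Assumption 5: one observes two independent samples $(Y_{i1},X_{i1})_{i=1}^n$ and $(Y_{i2},X_{i2})_{i=1}^n$, i.i.d. from the distributions of $(Y_1,X_1)$ and $(Y_2,X_2)$. Assumption 6: (i) there is a unique $x_1^*$ with $F_{X_1}(x_1^* )=F_{X_2}(x_1^* )\in(0,1)$, and $F_{X_1}(x_1^* )\in(\underline p,\overline p)$; (ii) for $t\in\{1,2\}$, $X_t$ has a continuous density $f_{X_t}$ with $f_{X_t}(x)>0$ for all $x$ in the interior of $\mathcal X$, and $f_{X_1}(x_1^* )\ne f_{X_2}(x_1^* )$.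
   Context: Two periods $t\in\{1,2\}$; potential outcomes $Y_t(x)$, $x\in\mathcal X\subset\mathbb R$; observed real treatment $X_t$ and outcome $Y_t=Y_t(X_t)$; $V_t=F_{X_t}(X_t)$. Fixed constants $0<\underline p<\overline p<1$. $\widehat F_{X_t}$ is the empirical cdf of $(X_{it})_i$ and $\widehat F^{-1}_{X_t}$ the empirical quantile function; $\Psi_n(x)=\widehat F_{X_2}(x)-\widehat F_{X_1}(x)$; $\widehat x_1^*$ is the smallest $x\in I_n=[\widehat F^{-1}_{X_1}(\underline p),\widehat F^{-1}_{X_1}(\overline p)]$ such that $|\Psi_n(x)|\le|\Psi_n(x')|$ for all $x'\in I_n$. *)

theory Defs
  imports "HOL-Probability.Probability"
begin

definition pop_cdf :: "'a measure \<Rightarrow> ('a \<Rightarrow> real) \<Rightarrow> real \<Rightarrow> real" where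
  "pop_cdf M X x = measure M {\<omega> \<in> space M. X \<omega> \<le> x}"

definition emp_cdf :: "(nat \<Rightarrow> 'a \<Rightarrow> real) \<Rightarrow> nat \<Rightarrow> 'a \<Rightarrow> real \<Rightarrow> real" where
  "emp_cdf Z n \<omega> x = real (card {i. i < n \<and> Z i \<omega> \<le> x}) / real n"

definition emp_quantile :: "(nat \<Rightarrow> 'a \<Rightarrow> real) \<Rightarrow> nat \<Rightarrow> 'a \<Rightarrow> real \<Rightarrow> real" where
  "emp_quantile Z n \<omega> p = Inf {x. emp_cdf Z n \<omega> x \<ge> p}"

definition xhat_star ::
  "(nat \<Rightarrow> 'a \<Rightarrow> real) \<Rightarrow> (nat \<Rightarrow> 'a \<Rightarrow> real) \<Rightarrow> real \<Rightarrow> real \<Rightarrow> nat \<Rightarrow> 'a \<Rightarrow> real" where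
  "xhat_star Z1 Z2 pl ph n \<omega> =
     (let I = {emp_quantile Z1 n \<omega> pl .. emp_quantile Z1 n \<omega> ph};
          Psi = (\<lambda>x. emp_cdf Z2 n \<omega> x - emp_cdf Z1 n \<omega> x)
      in LEAST x. x \<in> I \<and> (\<forall>x'\<in>I. \<bar>Psi x\<bar> \<le> \<bar>Psi x'\<bar>))"

text \<open>Stochastic boundedness O_p(1), phrased with outer probability
  (so that no measurability of Z n needs to be presupposed):
  for every eps > 0 there are K and N such that for n >= N the event |Z n| > K
  is contained in a measurable set of probability < eps.\<close>
definition bounded_in_prob :: "'a measure \<Rightarrow> (nat \<Rightarrow> 'a \<Rightarrow> real) \<Rightarrow> bool" where
  "bounded_in_prob M Z \<longleftrightarrow>
     (\<forall>\<epsilon>>0. \<exists>K N. \<forall>n\<ge>N. \<exists>A\<in>sets M.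
        {\<omega> \<in> space M. \<bar>Z n \<omega>\<bar> > K} \<subseteq> A \<and> measure M A < \<epsilon>)"

end

theory Submission
  imports Defs
begin


lemma emp_cdf_mono:
  assumes "x \<le> y" shows "emp_cdf Z n \<omega> x \<le> emp_cdf Z n \<omega> y"
proof -
  have "card {i. i < n \<and> Z i \<omega> \<le> x} \<le> card {i. i < n \<and> Z i \<omega> \<le> y}"
    by (rule card_mono) (use assms in auto)
  then show ?thesis unfolding emp_cdf_def by (simp add: divide_right_mono)
qed

lemma emp_cdf_range: "emp_cdf Z n \<omega> x \<in> (\<lambda>j. real j / real n) ` {..n}"
proof -
  have "card {i. i < n \<and> Z i \<omega> \<le> x} \<le> card {..<n}"
    by (rule card_mono) auto
  then show ?thesis unfolding emp_cdf_def by auto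
qed

lemma emp_cdf_rc:
  "\<exists>\<epsilon>>0. \<forall>y. s \<le> y \<longrightarrow> y < s + \<epsilon> \<longrightarrow> emp_cdf Z n \<omega> y = emp_cdf Z n \<omega> s"
proof -
  define D where "D = {Z i \<omega> - s | i. i < n \<and> Z i \<omega> > s}"
  have finD: "finite D" unfolding D_def by auto
  define \<epsilon> where "\<epsilon> = (if D = {} then 1 else Min D)"
  have epos: "\<epsilon> > 0" using finD unfolding \<epsilon>_def by (auto simp: D_def)
  have "emp_cdf Z n \<omega> y = emp_cdf Z n \<omega> s" if "s \<le> y" "y < s + \<epsilon>" for y
  proof -
    have "{i. i < n \<and> Z i \<omega> \<le> y} = {i. i < n \<and> Z i \<omega> \<le> s}"
    proof (intro set_eqI iffI)
      fix i assume i: "i \<in> {i. i < n \<and> Z i \<omega> \<le> y}"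
      show "i \<in> {i. i < n \<and> Z i \<omega> \<le> s}"
      proof (rule ccontr)
        assume "i \<notin> {i. i < n \<and> Z i \<omega> \<le> s}"
        then have gt: "Z i \<omega> > s" using i by auto
        then have "Z i \<omega> - s \<in> D" using i unfolding D_def by auto
        then have "\<epsilon> \<le> Z i \<omega> - s" using finD unfolding \<epsilon>_def by auto
        then show False using i that by auto
      qed
    qed (use that in auto)
    then show ?thesis unfolding emp_cdf_def by simp
  qed
  then show ?thesis using epos by blast
qed

lemma least_min_exists:
  fixes \<phi> :: "real \<Rightarrow> real"
  assumes fin: "finite (range \<phi>)"
    and rc: "\<And>s. \<exists>\<epsilon>>0. \<forall>y. s \<le> y \<longrightarrow> y < s + \<epsilon> \<longrightarrow> \<phi> y = \<phi> s"
    and ab: "a \<le> b"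
  shows "\<exists>s. s \<in> {a..b} \<and> (\<forall>x'\<in>{a..b}. \<bar>\<phi> s\<bar> \<le> \<bar>\<phi> x'\<bar>) \<and>
     (\<forall>y. (y \<in> {a..b} \<and> (\<forall>x'\<in>{a..b}. \<bar>\<phi> y\<bar> \<le> \<bar>\<phi> x'\<bar>)) \<longrightarrow> s \<le> y)"
proof -
  define V where "V = (\<lambda>x. \<bar>\<phi> x\<bar>) ` {a..b}"
  have finV: "finite V" unfolding V_def
    by (rule finite_subset[OF _ finite_imageI[OF fin, of abs]]) auto
  have neV: "V \<noteq> {}" using ab unfolding V_def by auto
  define m where "m = Min V"
  have mle: "m \<le> \<bar>\<phi> x\<bar>" if "x \<in> {a..b}" for x
    using finV that unfolding m_def V_def by auto
  obtain x0 where x0: "x0 \<in> {a..b}" "\<bar>\<phi> x0\<bar> = m"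
    using Min_in[OF finV neV] unfolding m_def V_def by auto
  define S where "S = {x\<in>{a..b}. \<bar>\<phi> x\<bar> = m}"
  have Sne: "S \<noteq> {}" using x0 S_def by auto
  have Sbdd: "bdd_below S" unfolding S_def by (rule bdd_belowI[of _ a]) auto
  define s where "s = Inf S"
  have sa: "a \<le> s" unfolding s_def using Sne by (intro cInf_greatest) (auto simp: S_def)
  have sb: "s \<le> b" unfolding s_def using x0 Sbdd by (intro cInf_lower2[of x0]) (auto simp: S_def)
  have sle: "s \<le> y" if "y \<in> S" for y unfolding s_def using that Sbdd by (rule cInf_lower)
  have "\<bar>\<phi> s\<bar> = m"
  proof (rule ccontr)
    assume ne: "\<bar>\<phi> s\<bar> \<noteq> m"
    obtain \<epsilon> where e: "\<epsilon> > 0" "\<forall>y. s \<le> y \<longrightarrow> y < s + \<epsilon> \<longrightarrow> \<phi> y = \<phi> s" using rc by blast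
    have "Inf S < s + \<epsilon>" using e unfolding s_def by simp
    then obtain y where y: "y \<in> S" "y < s + \<epsilon>" using cInf_less_iff[OF Sne Sbdd] by blast
    have "s \<le> y" using sle y(1) by blast
    then have "\<phi> y = \<phi> s" using e(2) y(2) by blast
    then show False using y ne unfolding S_def by auto
  qed
  then have sS: "s \<in> S" unfolding S_def using sa sb by auto
  show ?thesis
  proof (intro exI conjI allI impI ballI)
    show "s \<in> {a..b}" using sa sb by auto
    show "\<bar>\<phi> s\<bar> \<le> \<bar>\<phi> x'\<bar>" if "x' \<in> {a..b}" for x' using mle[OF that] sS S_def by auto
    fix y assume y: "y \<in> {a..b} \<and> (\<forall>x'\<in>{a..b}. \<bar>\<phi> y\<bar> \<le> \<bar>\<phi> x'\<bar>)"
    then have "\<bar>\<phi> y\<bar> \<le> m" using x0 by auto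
    with mle[of y] y have "y \<in> S" unfolding S_def by auto
    then show "s \<le> y" by (rule sle)
  qed
qed

lemma rc_diff:
  fixes g1 g2 :: "real \<Rightarrow> real"
  assumes "\<exists>e>0. \<forall>y. s \<le> y \<longrightarrow> y < s + e \<longrightarrow> g1 y = g1 s"
    and "\<exists>e>0. \<forall>y. s \<le> y \<longrightarrow> y < s + e \<longrightarrow> g2 y = g2 s"
  shows "\<exists>e>0. \<forall>y. s \<le> y \<longrightarrow> y < s + e \<longrightarrow> g2 y - g1 y = g2 s - g1 s"
proof -
  from assms(1) obtain e1 where e1: "e1 > 0" "\<forall>y. s \<le> y \<longrightarrow> y < s + e1 \<longrightarrow> g1 y = g1 s" by blast
  from assms(2) obtain e2 where e2: "e2 > 0" "\<forall>y. s \<le> y \<longrightarrow> y < s + e2 \<longrightarrow> g2 y = g2 s" by blast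
  show ?thesis
  proof (intro exI[of _ "min e1 e2"] conjI allI impI)
    show "min e1 e2 > 0" using e1(1) e2(1) by simp
    fix y assume y: "s \<le> y" "y < s + min e1 e2"
    have "min e1 e2 \<le> e1" "min e1 e2 \<le> e2" by simp_all
    then have "y < s + e1" "y < s + e2" using y(2) by linarith+
    then have "g1 y = g1 s" "g2 y = g2 s" using e1(2) e2(2) y(1) by blast+
    then show "g2 y - g1 y = g2 s - g1 s" by simp
  qed
qed

lemma xhat_props:
  fixes Z1 Z2 :: "nat \<Rightarrow> 'a \<Rightarrow> real"
  assumes ab: "emp_quantile Z1 n \<omega> pl \<le> emp_quantile Z1 n \<omega> ph"
  shows "xhat_star Z1 Z2 pl ph n \<omega> \<in> {emp_quantile Z1 n \<omega> pl .. emp_quantile Z1 n \<omega> ph} \<and>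
     (\<forall>x'\<in>{emp_quantile Z1 n \<omega> pl .. emp_quantile Z1 n \<omega> ph}.
        \<bar>emp_cdf Z2 n \<omega> (xhat_star Z1 Z2 pl ph n \<omega>) - emp_cdf Z1 n \<omega> (xhat_star Z1 Z2 pl ph n \<omega>)\<bar>
         \<le> \<bar>emp_cdf Z2 n \<omega> x' - emp_cdf Z1 n \<omega> x'\<bar>)"
proof -
  define a where "a = emp_quantile Z1 n \<omega> pl"
  define b where "b = emp_quantile Z1 n \<omega> ph"
  define Psi where "Psi = (\<lambda>x. emp_cdf Z2 n \<omega> x - emp_cdf Z1 n \<omega> x)"
  define R where "R = (\<lambda>j. real j / real n) ` {..n}"
  have fin: "finite (range Psi)"
  proof (rule finite_subset)
    show "range Psi \<subseteq> (\<lambda>(u,v). v - u) ` (R \<times> R)"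
    proof
      fix y assume "y \<in> range Psi"
      then obtain x where x: "y = Psi x" by auto
      have "(emp_cdf Z1 n \<omega> x, emp_cdf Z2 n \<omega> x) \<in> R \<times> R"
        unfolding R_def by (simp add: emp_cdf_range)
      then show "y \<in> (\<lambda>(u,v). v - u) ` (R \<times> R)"
        unfolding x Psi_def by (rule rev_image_eqI) simp
    qed
    show "finite ((\<lambda>(u,v). v - u) ` (R \<times> R))" unfolding R_def by simp
  qed
  have rc: "\<exists>\<epsilon>>0. \<forall>y. s \<le> y \<longrightarrow> y < s + \<epsilon> \<longrightarrow> Psi y = Psi s" for s
    unfolding Psi_def by (rule rc_diff[OF emp_cdf_rc emp_cdf_rc])
  have ab': "a \<le> b" using ab unfolding a_def b_def .
  obtain s where s1: "s \<in> {a..b}" and s2: "\<forall>x'\<in>{a..b}. \<bar>Psi s\<bar> \<le> \<bar>Psi x'\<bar>"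
     and s3: "\<forall>y. (y \<in> {a..b} \<and> (\<forall>x'\<in>{a..b}. \<bar>Psi y\<bar> \<le> \<bar>Psi x'\<bar>)) \<longrightarrow> s \<le> y"
    using least_min_exists[OF fin rc ab'] by (elim exE conjE)
  have "xhat_star Z1 Z2 pl ph n \<omega> = (LEAST x. x \<in> {a..b} \<and> (\<forall>x'\<in>{a..b}. \<bar>Psi x\<bar> \<le> \<bar>Psi x'\<bar>))"
    unfolding xhat_star_def Let_def a_def b_def Psi_def ..
  also have "\<dots> = s"
  proof (rule Least_equality)
    show "s \<in> {a..b} \<and> (\<forall>x'\<in>{a..b}. \<bar>Psi s\<bar> \<le> \<bar>Psi x'\<bar>)" using s1 s2 by (rule conjI)
  next
    fix y assume "y \<in> {a..b} \<and> (\<forall>x'\<in>{a..b}. \<bar>Psi y\<bar> \<le> \<bar>Psi x'\<bar>)"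
    with s3 show "s \<le> y" by blast
  qed
  finally show ?thesis using s1 s2 unfolding a_def b_def Psi_def by simp
qed

lemma emp_quantile_le:
  assumes "n > 0" "p > 0" "emp_cdf Z n \<omega> z \<ge> p"
  shows "emp_quantile Z n \<omega> p \<le> z"
proof -
  define m where "m = Min ((\<lambda>i. Z i \<omega>) ` {..<n})"
  have "bdd_below {x. emp_cdf Z n \<omega> x \<ge> p}"
  proof (rule bdd_belowI[of _ m])
    fix x assume "x \<in> {x. emp_cdf Z n \<omega> x \<ge> p}"
    then have pc: "p \<le> real (card {i. i < n \<and> Z i \<omega> \<le> x}) / real n" unfolding emp_cdf_def by auto
    have "card {i. i < n \<and> Z i \<omega> \<le> x} \<noteq> 0"
    proof
      assume "card {i. i < n \<and> Z i \<omega> \<le> x} = 0"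
      with pc assms(2) show False by simp
    qed
    then have "{i. i < n \<and> Z i \<omega> \<le> x} \<noteq> {}" by (metis card.empty)
    then obtain i where "i < n" "Z i \<omega> \<le> x" by blast
    moreover have "m \<le> Z i \<omega>" unfolding m_def using \<open>i < n\<close> by (intro Min_le) auto
    ultimately show "m \<le> x" by linarith
  qed
  then show ?thesis unfolding emp_quantile_def using assms(3) by (intro cInf_lower) auto
qed

lemma emp_quantile_ge:
  assumes "\<And>x. x < z \<Longrightarrow> emp_cdf Z n \<omega> x < p" "emp_cdf Z n \<omega> w \<ge> p"
  shows "z \<le> emp_quantile Z n \<omega> p"
  unfolding emp_quantile_def
proof (rule cInf_greatest)
  show "{x. p \<le> emp_cdf Z n \<omega> x} \<noteq> {}" using assms(2) by auto
  fix x assume "x \<in> {x. p \<le> emp_cdf Z n \<omega> x}"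
  then show "z \<le> x" using assms(1)[of x] by (metis mem_Collect_eq not_le)
qed



lemma pop_cdf_mono:
  assumes M: "prob_space M" and Xm: "X \<in> borel_measurable M" and xy: "x \<le> y"
  shows "pop_cdf M X x \<le> pop_cdf M X y"
proof -
  interpret prob_space M by (rule M)
  show ?thesis unfolding pop_cdf_def
    by (rule finite_measure_mono) (use xy Xm in auto)
qed

lemma pop_cdf_eq_cdf:
  assumes M: "prob_space M" and Xm: "X \<in> borel_measurable M"
  shows "pop_cdf M X = cdf (distr M borel X)"
proof
  fix x
  have "cdf (distr M borel X) x = measure (distr M borel X) {..x}" by (simp add: cdf_def)
  also have "\<dots> = measure M (X -` {..x} \<inter> space M)" using Xm by (simp add: measure_distr)
  also have "X -` {..x} \<inter> space M = {\<omega> \<in> space M. X \<omega> \<le> x}" by auto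
  finally show "pop_cdf M X x = cdf (distr M borel X) x" unfolding pop_cdf_def by simp
qed

lemma pop_cdf_lims:
  assumes M: "prob_space M" and Xm: "X \<in> borel_measurable M"
  shows "(pop_cdf M X \<longlongrightarrow> 0) at_bot" "(pop_cdf M X \<longlongrightarrow> 1) at_top"
proof -
  interpret prob_space M by (rule M)
  interpret R: real_distribution "distr M borel X" using Xm by simp
  show "(pop_cdf M X \<longlongrightarrow> 0) at_bot" unfolding pop_cdf_eq_cdf[OF M Xm] by (rule R.cdf_lim_at_bot)
  show "(pop_cdf M X \<longlongrightarrow> 1) at_top" unfolding pop_cdf_eq_cdf[OF M Xm] by (rule R.cdf_lim_at_top_prob)
qed

lemma pop_cdf_incr_emeasure:
  assumes M: "prob_space M" and D: "distributed M lborel X (\<lambda>x. ennreal (f x))" and uv: "u \<le> v"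
  shows "ennreal (pop_cdf M X v - pop_cdf M X u) = (\<integral>\<^sup>+x. ennreal (f x) * indicator {u<..v} x \<partial>lborel)"
proof -
  interpret prob_space M by (rule M)
  have Xm: "X \<in> borel_measurable M" using D unfolding distributed_def by simp
  have fm: "(\<lambda>x. ennreal (f x)) \<in> borel_measurable lborel" using D unfolding distributed_def by simp
  have dd: "distr M lborel X = density lborel (\<lambda>x. ennreal (f x))" using D unfolding distributed_def by simp
  have "pop_cdf M X v - pop_cdf M X u = measure M ({\<omega> \<in> space M. X \<omega> \<le> v} - {\<omega> \<in> space M. X \<omega> \<le> u})"
    unfolding pop_cdf_def by (subst finite_measure_Diff) (use Xm uv in auto)
  also have "{\<omega> \<in> space M. X \<omega> \<le> v} - {\<omega> \<in> space M. X \<omega> \<le> u} = X -` {u<..v} \<inter> space M" by auto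
  finally have eq: "pop_cdf M X v - pop_cdf M X u = measure M (X -` {u<..v} \<inter> space M)" .
  have "ennreal (measure M (X -` {u<..v} \<inter> space M)) = emeasure M (X -` {u<..v} \<inter> space M)"
    by (rule emeasure_eq_measure[symmetric])
  also have "\<dots> = emeasure (distr M lborel X) {u<..v}"
    using Xm by (subst emeasure_distr) auto
  also have "\<dots> = emeasure (density lborel (\<lambda>x. ennreal (f x))) {u<..v}" unfolding dd ..
  also have "\<dots> = (\<integral>\<^sup>+x. ennreal (f x) * indicator {u<..v} x \<partial>lborel)"
    by (rule emeasure_density[OF fm]) simp
  finally show ?thesis unfolding eq .
qed

lemma pop_cdf_incr_upper:
  assumes M: "prob_space M" and D: "distributed M lborel X (\<lambda>x. ennreal (f x))" and uv: "u \<le> v"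
    and nn: "\<And>x. 0 \<le> f x" and hi: "\<And>x. x \<in> {u..v} \<Longrightarrow> f x \<le> hi"
  shows "pop_cdf M X v - pop_cdf M X u \<le> hi * (v - u)"
proof -
  have hi0: "0 \<le> hi" using nn[of v] hi[of v] uv by auto
  have "ennreal (pop_cdf M X v - pop_cdf M X u) = (\<integral>\<^sup>+x. ennreal (f x) * indicator {u<..v} x \<partial>lborel)"
    by (rule pop_cdf_incr_emeasure[OF M D uv])
  also have "\<dots> \<le> (\<integral>\<^sup>+x. ennreal hi * indicator {u<..v} x \<partial>lborel)"
    by (intro nn_integral_mono) (auto simp: indicator_def intro!: ennreal_leI hi)
  also have "\<dots> = ennreal hi * emeasure lborel {u<..v}"
    by (rule nn_integral_cmult_indicator) simp
  also have "\<dots> = ennreal (hi * (v - u))" using uv hi0 by (simp add: ennreal_mult)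
  finally show ?thesis using hi0 uv by (subst (asm) ennreal_le_iff) auto
qed

lemma pop_cdf_incr_lower:
  assumes M: "prob_space M" and D: "distributed M lborel X (\<lambda>x. ennreal (f x))" and uv: "u \<le> v"
    and lo: "\<And>x. x \<in> {u..v} \<Longrightarrow> lo \<le> f x"
  shows "lo * (v - u) \<le> pop_cdf M X v - pop_cdf M X u"
proof (cases "lo \<ge> 0")
  case False
  have Xm: "X \<in> borel_measurable M" using D unfolding distributed_def by simp
  have "0 \<le> pop_cdf M X v - pop_cdf M X u" using pop_cdf_mono[OF M Xm uv] by simp
  moreover have "lo * (v - u) \<le> 0" using False uv by (simp add: mult_nonpos_nonneg)
  ultimately show ?thesis by linarith
next
  case True
  have "ennreal (lo * (v - u)) = ennreal lo * emeasure lborel {u<..v}"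
    using uv True by (simp add: ennreal_mult)
  also have "\<dots> = (\<integral>\<^sup>+x. ennreal lo * indicator {u<..v} x \<partial>lborel)"
    by (rule nn_integral_cmult_indicator[symmetric]) simp
  also have "\<dots> \<le> (\<integral>\<^sup>+x. ennreal (f x) * indicator {u<..v} x \<partial>lborel)"
    by (intro nn_integral_mono) (auto simp: indicator_def intro!: ennreal_leI lo)
  also have "\<dots> = ennreal (pop_cdf M X v - pop_cdf M X u)"
    by (rule pop_cdf_incr_emeasure[OF M D uv, symmetric])
  finally have "ennreal (lo * (v - u)) \<le> ennreal (pop_cdf M X v - pop_cdf M X u)" .
  moreover have Xm: "X \<in> borel_measurable M" using D unfolding distributed_def by simp
  moreover have "0 \<le> pop_cdf M X v - pop_cdf M X u" using pop_cdf_mono[OF M Xm uv] by simp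
  ultimately show ?thesis by (auto simp add: ennreal_le_iff2)
qed



lemma emp_cdf_hoeffding:
  fixes M :: "'a measure" and Xs Ys :: "nat \<Rightarrow> nat \<Rightarrow> 'a \<Rightarrow> real" and X Y :: "nat \<Rightarrow> 'a \<Rightarrow> real"
  assumes M: "prob_space M"
    and meas: "\<And>i. Xs t i \<in> borel_measurable M \<and> Ys t i \<in> borel_measurable M"
    and indep: "prob_space.indep_vars M (\<lambda>_. borel) (\<lambda>(t,i) \<omega>. (Ys t i \<omega>, Xs t i \<omega>)) ({1,2} \<times> UNIV)"
    and ident: "\<And>i. distr M borel (\<lambda>\<omega>. (Ys t i \<omega>, Xs t i \<omega>)) = distr M borel (\<lambda>\<omega>. (Y t \<omega>, X t \<omega>))"
    and t: "t \<in> {1,2}"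
    and Xm: "X t \<in> borel_measurable M" and Ym: "Y t \<in> borel_measurable M"
    and n: "n > 0" and e: "e \<ge> 0"
  shows "{\<omega> \<in> space M. \<bar>emp_cdf (Xs t) n \<omega> u - pop_cdf M (X t) u\<bar> \<ge> e} \<in> sets M \<and>
    measure M {\<omega> \<in> space M. \<bar>emp_cdf (Xs t) n \<omega> u - pop_cdf M (X t) u\<bar> \<ge> e} \<le> 2 * exp (-2 * real n * e\<^sup>2)"
proof -
  interpret prob_space M by (rule M)
  define P where "P = (\<lambda>(t::nat,i::nat) \<omega>. (Ys t i \<omega>, Xs t i \<omega>))"
  define h :: "real \<times> real \<Rightarrow> real" where "h = (\<lambda>p. if snd p \<le> u then 1 else 0)"
  have S: "{p::real\<times>real. snd p \<le> u} \<in> sets borel"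
    by (rule borel_closed) (intro closed_Collect_le continuous_intros)
  have "h = indicator {p::real\<times>real. snd p \<le> u}" by (auto simp: h_def indicator_def fun_eq_iff)
  then have hm: "h \<in> borel_measurable borel" using borel_measurable_indicator[OF S] by simp
  define I where "I = Pair t ` {..<n}"
  define Z where "Z = (\<lambda>i \<omega>. h (P i \<omega>))"
  define Y0 where "Y0 = (\<lambda>\<omega>. h (Y t \<omega>, X t \<omega>))"
  have Pm: "P (t,i) \<in> borel_measurable M" for i
    unfolding P_def using meas[of i] by (auto intro!: borel_measurable_Pair)
  have ind: "indep_vars (\<lambda>_. borel) Z I"
    unfolding Z_def
  proof (rule indep_vars_compose2[where M'="\<lambda>_. borel" and X=P and Y="\<lambda>_. h"])
    show "indep_vars (\<lambda>_. borel) P I"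
      by (rule indep_vars_subset[OF indep[folded P_def]]) (use t in \<open>auto simp: I_def\<close>)
    show "h \<in> borel_measurable borel" for i by (rule hm)
  qed
  have Y0m: "Y0 \<in> borel_measurable M" unfolding Y0_def using hm Xm Ym by measurable
  have dist: "distr M borel (Z i) = distr M borel Y0" if iI: "i \<in> I" for i
  proof -
    obtain j where j: "i = (t,j)" using iI unfolding I_def by auto
    have "distr M borel (Z i) = distr (distr M borel (P (t,j))) borel h"
      unfolding Z_def j by (subst distr_distr[OF hm Pm]) (simp add: comp_def)
    also have "distr M borel (P (t,j)) = distr M borel (\<lambda>\<omega>. (Y t \<omega>, X t \<omega>))"
      unfolding P_def using ident by simp
    also have "distr (distr M borel (\<lambda>\<omega>. (Y t \<omega>, X t \<omega>))) borel h = distr M borel Y0"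
      unfolding Y0_def using Xm Ym by (subst distr_distr[OF hm]) (auto simp: comp_def)
    finally show ?thesis .
  qed
  have Y01: "AE x in M. Y0 x \<in> {0..1}" unfolding Y0_def h_def by auto
  interpret H: Hoeffding_ineq_iid M I Z Y0 0 1 "expectation Y0"
  proof unfold_locales
    show "finite I" unfolding I_def by simp
    show "indep_vars (\<lambda>_. borel) Z I" by (rule ind)
    show "distr M borel (Z i) = distr M borel Y0" if "i \<in> I" for i using that by (rule dist)
    show "random_variable borel Y0" by (rule Y0m)
    show "AE x in M. Y0 x \<in> {0..1}" by (rule Y01)
  qed
  have cI: "card I = n" unfolding I_def by (subst card_image) (auto simp: inj_on_def)
  have EY0: "expectation Y0 = pop_cdf M (X t) u"
  proof -
    have A: "{\<omega> \<in> space M. X t \<omega> \<le> u} \<in> sets M" using Xm by measurable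
    have "expectation Y0 = expectation (indicator {\<omega> \<in> space M. X t \<omega> \<le> u})"
      by (rule Bochner_Integration.integral_cong) (auto simp: Y0_def h_def indicator_def)
    also have "\<dots> = measure M {\<omega> \<in> space M. X t \<omega> \<le> u}"
      using A by simp
    finally show ?thesis unfolding pop_cdf_def .
  qed
  have sumeq: "(\<Sum>i\<in>I. Z i \<omega>) = real (card {i. i < n \<and> Xs t i \<omega> \<le> u})" for \<omega>
  proof -
    have "(\<Sum>i\<in>I. Z i \<omega>) = (\<Sum>j\<in>{..<n}. Z (t,j) \<omega>)"
      unfolding I_def by (subst sum.reindex) (auto simp: inj_on_def)
    also have "\<dots> = (\<Sum>j\<in>{..<n}. if Xs t j \<omega> \<le> u then 1 else 0)"
      unfolding Z_def P_def h_def by simp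
    also have "\<dots> = real (card {i. i < n \<and> Xs t i \<omega> \<le> u})"
      by (simp add: sum.If_cases lessThan_def Collect_conj_eq Int_commute)
    finally show ?thesis .
  qed
  have seteq: "{\<omega> \<in> space M. \<bar>emp_cdf (Xs t) n \<omega> u - pop_cdf M (X t) u\<bar> \<ge> e}
     = {\<omega>\<in>space M. \<bar>(\<Sum>i\<in>I. Z i \<omega>) / real (card I) - expectation Y0\<bar> \<ge> e}"
    unfolding emp_cdf_def sumeq cI EY0 ..
  have "{\<omega>\<in>space M. \<bar>(\<Sum>i\<in>I. Z i \<omega>) / real (card I) - expectation Y0\<bar> \<ge> e} \<in> sets M"
  proof -
    have "(\<lambda>\<omega>. (\<Sum>i\<in>I. Z i \<omega>)) \<in> borel_measurable M"
      using H.X.random_variable by (intro borel_measurable_sum) auto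
    then show ?thesis by measurable
  qed
  moreover have "prob {\<omega>\<in>space M. \<bar>(\<Sum>i\<in>I. Z i \<omega>) / real (card I) - expectation Y0\<bar> \<ge> e}
      \<le> 2 * exp (-2 * real (card I) * e\<^sup>2 / (1 - 0)\<^sup>2)"
    by (rule H.Hoeffding_ineq_abs_ge'[OF e]) (use n in \<open>auto simp: I_def\<close>)
  ultimately show ?thesis unfolding seteq cI by simp
qed



lemma cont_upper_bound:
  fixes f :: "real \<Rightarrow> real"
  assumes "continuous_on UNIV f"
  shows "\<exists>B. \<forall>x\<in>{a..b}. f x \<le> B"
proof -
  have "bounded (f ` {a..b})"
    by (rule compact_imp_bounded[OF compact_continuous_image])
       (use assms in \<open>auto intro: continuous_on_subset\<close>)
  then obtain B where "\<forall>y\<in>f ` {a..b}. \<bar>y\<bar> \<le> B" unfolding bounded_real by blast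
  then show ?thesis by (intro exI[of _ B]) auto
qed

lemma pop_cdf_lip:
  assumes M: "prob_space M" and D: "distributed M lborel X (\<lambda>x. ennreal (f x))"
    and nn: "\<And>x. 0 \<le> f x" and cf: "continuous_on UNIV f"
  shows "\<exists>B\<ge>0. \<forall>u v. a \<le> u \<longrightarrow> u \<le> v \<longrightarrow> v \<le> b \<longrightarrow> pop_cdf M X v - pop_cdf M X u \<le> B * (v - u)"
proof -
  obtain B where B: "\<forall>x\<in>{a..b}. f x \<le> B" using cont_upper_bound[OF cf] by blast
  show ?thesis
  proof (intro exI[of _ "max B 0"] conjI allI impI)
    fix u v assume uv: "a \<le> u" "u \<le> v" "v \<le> b"
    show "pop_cdf M X v - pop_cdf M X u \<le> max B 0 * (v - u)"
    proof (rule pop_cdf_incr_upper[OF M D uv(2) nn])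
      fix x assume "x \<in> {u..v}"
      then have "f x \<le> B" using B uv by auto
      then show "f x \<le> max B 0" by linarith
    qed
  qed simp
qed

lemma pop_cdf_cont:
  assumes M: "prob_space M" and D: "distributed M lborel X (\<lambda>x. ennreal (f x))"
    and nn: "\<And>x. 0 \<le> f x" and cf: "continuous_on UNIV f"
  shows "continuous_on UNIV (pop_cdf M X)"
  unfolding continuous_on_iff
proof (intro ballI allI impI)
  fix x :: real and e :: real assume e: "e > 0"
  have Xm: "X \<in> borel_measurable M" using D unfolding distributed_def by simp
  obtain B where B: "B \<ge> 0" "\<forall>u v. x - 1 \<le> u \<longrightarrow> u \<le> v \<longrightarrow> v \<le> x + 1 \<longrightarrow> pop_cdf M X v - pop_cdf M X u \<le> B * (v - u)"
    using pop_cdf_lip[OF M D nn cf, of "x - 1" "x + 1"] by blast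
  define d where "d = min 1 (e / (B + 1))"
  have d: "d > 0" unfolding d_def using e B by auto
  have "dist (pop_cdf M X y) (pop_cdf M X x) < e" if y: "dist y x < d" for y
  proof -
    have yx: "\<bar>y - x\<bar> < d" using y by (simp add: dist_real_def)
    have "B * d \<le> B * (e / (B+1))" using B(1) by (intro mult_left_mono) (auto simp: d_def)
    also have "\<dots> < e" using B(1) e by (simp add: field_simps)
    finally have Bd: "B * d < e" .
    show ?thesis
    proof (cases "x \<le> y")
      case True
      have "pop_cdf M X y - pop_cdf M X x \<le> B * (y - x)" using B(2) True yx d_def by auto
      also have "\<dots> \<le> B * d" using yx True B(1) by (intro mult_left_mono) auto
      finally show ?thesis using pop_cdf_mono[OF M Xm True] Bd by (simp add: dist_real_def)
    next
      case False
      have "pop_cdf M X x - pop_cdf M X y \<le> B * (x - y)" using B(2) False yx d_def by auto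
      also have "\<dots> \<le> B * d" using yx False B(1) by (intro mult_left_mono) auto
      finally show ?thesis using pop_cdf_mono[OF M Xm, of y x] False Bd by (simp add: dist_real_def)
    qed
  qed
  then show "\<exists>d>0. \<forall>y\<in>UNIV. dist y x < d \<longrightarrow> dist (pop_cdf M X y) (pop_cdf M X x) < e"
    using d by blast
qed

lemma local_sep:
  assumes M: "prob_space M"
    and Da: "distributed M lborel Xa (\<lambda>x. ennreal (fa x))" and Db: "distributed M lborel Xb (\<lambda>x. ennreal (fb x))"
    and nna: "\<And>x. 0 \<le> fa x" and nnb: "\<And>x. 0 \<le> fb x"
    and ca: "continuous_on UNIV fa" and cb: "continuous_on UNIV fb"
    and gt: "fa x0 > fb x0"
  shows "\<exists>\<delta>>0. \<forall>x. \<bar>x - x0\<bar> \<le> \<delta> \<longrightarrow>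
     (fa x0 - fb x0) / 2 * \<bar>x - x0\<bar> \<le> \<bar>(pop_cdf M Xa x - pop_cdf M Xb x) - (pop_cdf M Xa x0 - pop_cdf M Xb x0)\<bar>"
proof -
  define d where "d = fa x0 - fb x0"
  have d: "d > 0" using gt d_def by simp
  obtain da where da: "da > 0" "\<forall>y. dist y x0 < da \<longrightarrow> dist (fa y) (fa x0) < d / 4"
    using ca d unfolding continuous_on_iff by (metis UNIV_I zero_less_divide_iff zero_less_numeral)
  obtain db where db: "db > 0" "\<forall>y. dist y x0 < db \<longrightarrow> dist (fb y) (fb x0) < d / 4"
    using cb d unfolding continuous_on_iff by (metis UNIV_I zero_less_divide_iff zero_less_numeral)
  define \<delta> where "\<delta> = min da db / 2"
  have \<delta>: "\<delta> > 0" using da db \<delta>_def by simp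
  have near: "fa x0 - d/4 \<le> fa y \<and> fa y \<le> fa x0 + d/4 \<and> fb x0 - d/4 \<le> fb y \<and> fb y \<le> fb x0 + d/4"
    if "\<bar>y - x0\<bar> \<le> \<delta>" for y
  proof -
    have "dist y x0 < da" "dist y x0 < db" using that da db unfolding \<delta>_def dist_real_def by auto
    then have "\<bar>fa y - fa x0\<bar> < d / 4" "\<bar>fb y - fb x0\<bar> < d / 4"
      using da(2) db(2) unfolding dist_real_def by blast+
    then show ?thesis by linarith
  qed
  have "d / 2 * \<bar>x - x0\<bar> \<le> \<bar>(pop_cdf M Xa x - pop_cdf M Xb x) - (pop_cdf M Xa x0 - pop_cdf M Xb x0)\<bar>"
    if x: "\<bar>x - x0\<bar> \<le> \<delta>" for x
  proof (cases "x0 \<le> x")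
    case True
    have "(fa x0 - d/4) * (x - x0) \<le> pop_cdf M Xa x - pop_cdf M Xa x0"
      by (rule pop_cdf_incr_lower[OF M Da True]) (use near x True in auto)
    moreover have "pop_cdf M Xb x - pop_cdf M Xb x0 \<le> (fb x0 + d/4) * (x - x0)"
      by (rule pop_cdf_incr_upper[OF M Db True nnb]) (use near x True in auto)
    moreover have "(fa x0 - d/4) * (x - x0) - (fb x0 + d/4) * (x - x0) = d/2 * (x - x0)"
      unfolding d_def by (simp add: algebra_simps)
    ultimately have h: "d/2 * (x - x0) \<le> (pop_cdf M Xa x - pop_cdf M Xb x) - (pop_cdf M Xa x0 - pop_cdf M Xb x0)"
      by linarith
    have e: "\<bar>x - x0\<bar> = x - x0" using True by simp
    show ?thesis unfolding e using h abs_ge_self[of "(pop_cdf M Xa x - pop_cdf M Xb x) - (pop_cdf M Xa x0 - pop_cdf M Xb x0)"] by linarith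
  next
    case False
    then have F: "x \<le> x0" by simp
    have "(fa x0 - d/4) * (x0 - x) \<le> pop_cdf M Xa x0 - pop_cdf M Xa x"
      by (rule pop_cdf_incr_lower[OF M Da F]) (use near x F in auto)
    moreover have "pop_cdf M Xb x0 - pop_cdf M Xb x \<le> (fb x0 + d/4) * (x0 - x)"
      by (rule pop_cdf_incr_upper[OF M Db F nnb]) (use near x F in auto)
    moreover have "(fa x0 - d/4) * (x0 - x) - (fb x0 + d/4) * (x0 - x) = d/2 * (x0 - x)"
      unfolding d_def by (simp add: algebra_simps)
    ultimately have h: "d/2 * (x0 - x) \<le> (pop_cdf M Xa x0 - pop_cdf M Xb x0) - (pop_cdf M Xa x - pop_cdf M Xb x)"
      by linarith
    have e: "\<bar>x - x0\<bar> = x0 - x" using F by simp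
    show ?thesis unfolding e using h abs_ge_minus_self[of "(pop_cdf M Xa x - pop_cdf M Xb x) - (pop_cdf M Xa x0 - pop_cdf M Xb x0)"] by linarith
  qed
  then show ?thesis using \<delta> unfolding d_def by blast
qed



lemma det_bound:
  fixes F1 F2 G1 G2 :: "real \<Rightarrow> real" and k :: int
  assumes mG1: "mono G1" and mG2: "mono G2"
    and h: "h > 0" and r0: "r0 > 0" and c: "c > 0"
    and u: "u = xs + of_int k * h" and v: "v = xs + of_int (k+1) * h"
    and ux: "u \<le> x" and xv: "x \<le> v"
    and L1: "F1 v - F1 u \<le> B*h" and L2: "F2 v - F2 u \<le> B*h" and Bh: "B*h \<le> c/8 * r0"
    and sepu: "c*\<bar>u - xs\<bar> \<le> \<bar>F2 u - F1 u\<bar>" and sepv: "c*\<bar>v - xs\<bar> \<le> \<bar>F2 v - F1 v\<bar>"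
    and e1u: "\<bar>G1 u - F1 u\<bar> \<le> c/8 * max (\<bar>of_int k\<bar> * h) r0"
    and e2u: "\<bar>G2 u - F2 u\<bar> \<le> c/8 * max (\<bar>of_int k\<bar> * h) r0"
    and e1v: "\<bar>G1 v - F1 v\<bar> \<le> c/8 * max (\<bar>of_int (k+1)\<bar> * h) r0"
    and e2v: "\<bar>G2 v - F2 v\<bar> \<le> c/8 * max (\<bar>of_int (k+1)\<bar> * h) r0"
    and e10: "\<bar>G1 xs - F1 xs\<bar> \<le> c/8 * r0" and e20: "\<bar>G2 xs - F2 xs\<bar> \<le> c/8 * r0"
    and F0: "F1 xs = F2 xs"
    and far: "r0 < \<bar>x - xs\<bar>"
  shows "\<bar>G2 xs - G1 xs\<bar> < \<bar>G2 x - G1 x\<bar>"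
proof -
  have ku: "\<bar>of_int k\<bar> * h = \<bar>u - xs\<bar>" using u h by (simp add: abs_mult)
  have kv: "\<bar>of_int (k+1)\<bar> * h = \<bar>v - xs\<bar>" using v h by (simp add: abs_mult)
  define r where "r = max \<bar>u - xs\<bar> \<bar>v - xs\<bar>"
  have rx: "\<bar>x - xs\<bar> \<le> r" unfolding r_def using ux xv by (simp add: abs_if max_def) 
  have rr0: "r0 < r" using rx far by linarith
  have mu: "max \<bar>u - xs\<bar> r0 \<le> r" "max \<bar>v - xs\<bar> r0 \<le> r" using rr0 unfolding r_def by auto
  have eu: "c/8 * max (\<bar>of_int k\<bar> * h) r0 \<le> c/8 * r" unfolding ku using mu c by (intro mult_left_mono) auto
  have ev: "c/8 * max (\<bar>of_int (k+1)\<bar> * h) r0 \<le> c/8 * r" unfolding kv using mu c by (intro mult_left_mono) auto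
  have cr: "c * r0 < c * r" using rr0 c by simp
  have cr0: "0 < c * r0" using c r0 by simp
  have g1: "G1 u \<le> G1 x" "G1 x \<le> G1 v" using mG1 ux xv by (auto dest: monoD)
  have g2: "G2 u \<le> G2 x" "G2 x \<le> G2 v" using mG2 ux xv by (auto dest: monoD)
  have a1: "G1 v \<le> F1 v + c/8*r" using abs_le_D1[OF e1v] ev by linarith
  have a2: "F2 u - c/8*r \<le> G2 u" using abs_le_D2[OF e2u] eu by linarith
  have a3: "G2 v \<le> F2 v + c/8*r" using abs_le_D1[OF e2v] ev by linarith
  have a4: "F1 u - c/8*r \<le> G1 u" using abs_le_D2[OF e1u] eu by linarith
  have lo: "G2 x - G1 x \<ge> F2 u - F1 v - c/4 * r" using g1 g2 a1 a2 by linarith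
  have up: "G2 x - G1 x \<le> F2 v - F1 u + c/4 * r" using g1 g2 a3 a4 by linarith
  have big: "5/8 * (c * r) - c/8 * r0 \<le> \<bar>G2 x - G1 x\<bar>"
  proof (cases "\<bar>v - xs\<bar> \<le> \<bar>u - xs\<bar>")
    case True
    then have "r = \<bar>u - xs\<bar>" unfolding r_def by simp
    then have s: "c * r \<le> \<bar>F2 u - F1 u\<bar>" using sepu by simp
    show ?thesis
    proof (cases "F2 u - F1 u \<ge> 0")
      case True
      then have "c * r \<le> F2 u - F1 u" using s by simp
      then show ?thesis using lo L1 Bh cr cr0 abs_ge_self[of "G2 x - G1 x"] by linarith
    next
      case False
      then have "c * r \<le> -(F2 u - F1 u)" using s by simp
      then show ?thesis using up L2 Bh cr cr0 abs_ge_minus_self[of "G2 x - G1 x"] by linarith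
    qed
  next
    case False
    then have "r = \<bar>v - xs\<bar>" unfolding r_def by simp
    then have s: "c * r \<le> \<bar>F2 v - F1 v\<bar>" using sepv by simp
    show ?thesis
    proof (cases "F2 v - F1 v \<ge> 0")
      case True
      then have "c * r \<le> F2 v - F1 v" using s by simp
      then show ?thesis using lo L2 Bh cr cr0 abs_ge_self[of "G2 x - G1 x"] by linarith
    next
      case False
      then have "c * r \<le> -(F2 v - F1 v)" using s by simp
      then show ?thesis using up L1 Bh cr cr0 abs_ge_minus_self[of "G2 x - G1 x"] by linarith
    qed
  qed
  have small: "\<bar>G2 xs - G1 xs\<bar> \<le> c/4 * r0" 
  proof -
    have "G1 xs \<le> F1 xs + c/8*r0" "F1 xs - c/8*r0 \<le> G1 xs" using abs_le_D1[OF e10] abs_le_D2[OF e10] by linarith+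
    moreover have "G2 xs \<le> F2 xs + c/8*r0" "F2 xs - c/8*r0 \<le> G2 xs" using abs_le_D1[OF e20] abs_le_D2[OF e20] by linarith+
    ultimately show ?thesis using F0 unfolding abs_le_iff by (intro conjI; linarith)
  qed
  show ?thesis using big small cr cr0 by linarith
qed

lemma geom_int_sum:
  fixes S :: "int set" and q :: real
  assumes S: "finite S" and q: "0 \<le> q" "q \<le> 1/2"
  shows "(\<Sum>k\<in>S. q ^ nat \<bar>k\<bar>) \<le> 4"
proof -
  have gs: "(\<Sum>j\<in>A. q ^ j) \<le> 2" if A: "finite A" for A :: "nat set"
  proof -
    obtain N where "\<forall>n\<in>A. n < N" using A finite_nat_set_iff_bounded by blast
    then have N: "A \<subseteq> {..<N}" by auto
    have "(\<Sum>j\<in>A. q ^ j) \<le> (\<Sum>j<N. q ^ j)" by (rule sum_mono2) (use N q in auto)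
    also have "\<dots> = (1 - q ^ N) / (1 - q)" using q by (subst sum_gp_strict) auto
    also have "\<dots> \<le> 1 / (1 - q)" using q by (intro divide_right_mono) auto
    also have "\<dots> \<le> 2" using q by (simp add: field_simps)
    finally show ?thesis .
  qed
  define Sp where "Sp = S \<inter> {0..}"
  define Sn where "Sn = S \<inter> {..<0}"
  have "S = Sp \<union> Sn" "Sp \<inter> Sn = {}" unfolding Sp_def Sn_def by auto
  then have "(\<Sum>k\<in>S. q ^ nat \<bar>k\<bar>) = (\<Sum>k\<in>Sp. q ^ nat \<bar>k\<bar>) + (\<Sum>k\<in>Sn. q ^ nat \<bar>k\<bar>)"
    using S by (metis finite_Un sum.union_disjoint)
  also have "(\<Sum>k\<in>Sp. q ^ nat \<bar>k\<bar>) = (\<Sum>j\<in>(\<lambda>k. nat \<bar>k\<bar>) ` Sp. q ^ j)"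
    by (subst sum.reindex) (auto simp: inj_on_def Sp_def)
  also have "(\<Sum>k\<in>Sn. q ^ nat \<bar>k\<bar>) = (\<Sum>j\<in>(\<lambda>k. nat \<bar>k\<bar>) ` Sn. q ^ j)"
    by (subst sum.reindex) (auto simp: inj_on_def Sn_def)
  finally show ?thesis using gs[of "(\<lambda>k. nat \<bar>k\<bar>) ` Sp"] gs[of "(\<lambda>k. nat \<bar>k\<bar>) ` Sn"] S
    unfolding Sp_def Sn_def by auto
qed



lemma sep_global:
  fixes P :: "real \<Rightarrow> real"
  assumes cont: "continuous_on UNIV P" and P0: "P xs = 0" and iv: "L0 < xs" "xs < R0"
    and c1: "c1 > 0" and dl: "\<delta> > 0" and loc: "\<And>x. \<bar>x - xs\<bar> \<le> \<delta> \<Longrightarrow> c1 * \<bar>x - xs\<bar> \<le> \<bar>P x\<bar>"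
    and nz: "\<And>x. x \<in> {L0..R0} \<Longrightarrow> P x = 0 \<Longrightarrow> x = xs"
  shows "\<exists>c>0. \<forall>u\<in>{L0..R0}. c * \<bar>u - xs\<bar> \<le> \<bar>P u\<bar>"
proof -
  define d where "d = min \<delta> (min (xs - L0) (R0 - xs))"
  have d: "d > 0" "d \<le> \<delta>" "d \<le> xs - L0" "d \<le> R0 - xs" using dl iv unfolding d_def by auto
  define S where "S = {L0..xs - d} \<union> {xs + d..R0}"
  have cS: "compact S" unfolding S_def by (intro compact_Un compact_Icc)
  have neS: "S \<noteq> {}" unfolding S_def using d by auto
  have cP: "continuous_on S (\<lambda>x. \<bar>P x\<bar>)"
    by (intro continuous_intros continuous_on_subset[OF cont]) auto
  obtain z where z: "z \<in> S" "\<forall>y\<in>S. \<bar>P z\<bar> \<le> \<bar>P y\<bar>"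
    using continuous_attains_inf[OF cS neS cP] by blast
  have zr: "z \<in> {L0..R0}" "z \<noteq> xs" using z(1) d unfolding S_def by auto
  have c0: "\<bar>P z\<bar> > 0" using nz[OF zr(1)] zr(2) by auto
  define c where "c = min c1 (\<bar>P z\<bar> / (R0 - L0))"
  have cpos: "c > 0" unfolding c_def using c1 c0 iv by auto
  have "c * \<bar>u - xs\<bar> \<le> \<bar>P u\<bar>" if u: "u \<in> {L0..R0}" for u
  proof (cases "\<bar>u - xs\<bar> \<le> d")
    case True
    have "c * \<bar>u - xs\<bar> \<le> c1 * \<bar>u - xs\<bar>" unfolding c_def by (intro mult_right_mono) auto
    also have "\<dots> \<le> \<bar>P u\<bar>" using loc True d by auto
    finally show ?thesis .
  next
    case False
    then have "u \<in> S" using u unfolding S_def by auto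
    then have Pu: "\<bar>P z\<bar> \<le> \<bar>P u\<bar>" using z by auto
    have "c * \<bar>u - xs\<bar> \<le> (\<bar>P z\<bar> / (R0 - L0)) * \<bar>u - xs\<bar>" unfolding c_def by (intro mult_right_mono) auto
    also have "\<dots> \<le> (\<bar>P z\<bar> / (R0 - L0)) * (R0 - L0)"
      using u iv c0 by (intro mult_left_mono) auto
    also have "\<dots> = \<bar>P z\<bar>" using iv by simp
    finally show ?thesis using Pu by linarith
  qed
  then show ?thesis using cpos by blast
qed



lemma exp_term_arith:
  fixes \<kappa> r0 m h n :: real and k :: int
  assumes kp: "\<kappa> > 0" and r0: "r0 > 0" and m: "m > 0" and h: "h = r0 / m" and n: "n \<ge> 0"
    and am: "m \<le> \<kappa>\<^sup>2 * (n * r0\<^sup>2)"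
  shows "\<kappa>\<^sup>2 * (n * r0\<^sup>2) + \<bar>of_int k\<bar> \<le> 2 * n * (\<kappa> * max (\<bar>of_int k\<bar> * h) r0)\<^sup>2"
proof -
  define a where "a = \<kappa>\<^sup>2 * (n * r0\<^sup>2)"
  define M where "M = max (\<bar>of_int k\<bar> * h) r0"
  have M0: "r0 \<le> M" "\<bar>of_int k\<bar> * h \<le> M" unfolding M_def by auto
  have Mpos: "M > 0" using M0 r0 by linarith
  have "r0 * (1 + \<bar>of_int k\<bar> / m) = r0 + \<bar>of_int k\<bar> * h" using m h by (simp add: field_simps)
  also have "\<dots> \<le> 2 * M" using M0 by linarith
  finally have M2: "r0 * (1 + \<bar>of_int k\<bar> / m) \<le> 2 * M" .
  have nk: "0 \<le> n * \<kappa>\<^sup>2 * r0" using n kp r0 by simp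
  have "a + \<bar>of_int k\<bar> \<le> a + a * (\<bar>of_int k\<bar> / m)"
  proof -
    have "\<bar>of_int k\<bar> = m * (\<bar>of_int k\<bar> / m)" using m by simp
    also have "\<dots> \<le> a * (\<bar>of_int k\<bar> / m)" using am m unfolding a_def by (intro mult_right_mono) auto
    finally show ?thesis by simp
  qed
  also have "\<dots> = (n * \<kappa>\<^sup>2 * r0) * (r0 * (1 + \<bar>of_int k\<bar> / m))" unfolding a_def by (simp add: algebra_simps power2_eq_square)
  also have "\<dots> \<le> (n * \<kappa>\<^sup>2 * r0) * (2 * M)" by (rule mult_left_mono[OF M2 nk])
  also have "\<dots> = 2 * (n * \<kappa>\<^sup>2) * (r0 * M)" by (simp add: algebra_simps)
  also have "\<dots> \<le> 2 * (n * \<kappa>\<^sup>2) * (M * M)"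
    using M0 Mpos n by (intro mult_left_mono mult_right_mono) auto
  also have "\<dots> = 2 * n * (\<kappa> * M)\<^sup>2" by (simp add: algebra_simps power2_eq_square)
  finally show ?thesis unfolding a_def M_def .
qed

lemma exp_le_inv: "(x::real) \<ge> 0 \<Longrightarrow> exp (- x) \<le> 1 / (1 + x)"
proof -
  assume x: "x \<ge> 0"
  have "1 + x \<le> exp x" by (rule exp_ge_add_one_self)
  then have "1 / exp x \<le> 1 / (1 + x)" using x by (intro divide_left_mono) auto
  then show ?thesis by (simp add: exp_minus field_simps)
qed

lemma exp_m1_half: "exp (-1::real) \<le> 1/2"
  using exp_le_inv[of 1] by simp

lemma exp_int_pow: "exp (- \<bar>of_int k\<bar> :: real) = exp (-1) ^ nat \<bar>k\<bar>"
proof -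
  have "exp (- \<bar>of_int k\<bar> :: real) = exp (real (nat \<bar>k\<bar>) * (-1))" by simp
  also have "\<dots> = exp (-1) ^ nat \<bar>k\<bar>" by (rule exp_of_nat_mult)
  finally show ?thesis .
qed


theorem lemma2:
  fixes M :: "'a measure"
    and \<X> :: "real set"
    and X :: "nat \<Rightarrow> 'a \<Rightarrow> real"           \<comment> \<open>population treatment X_t\<close>
    and U :: "nat \<Rightarrow> real \<Rightarrow> 'a \<Rightarrow> real"   \<comment> \<open>U_t(x)\<close>
    and g :: "nat \<Rightarrow> real \<Rightarrow> real"         \<comment> \<open>g_t\<close>
    and Y :: "nat \<Rightarrow> 'a \<Rightarrow> real"           \<comment> \<open>observed outcome Y_t = Y_t(X_t)\<close>
    and Xs Ys :: "nat \<Rightarrow> nat \<Rightarrow> 'a \<Rightarrow> real"  \<comment> \<open>samples X_{it} = Xs t i, Y_{it} = Ys t i\<close>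
    and f :: "nat \<Rightarrow> real \<Rightarrow> real"         \<comment> \<open>densities f_{X_t}\<close>
    and pl ph xs :: real
  assumes M: "prob_space M"
    and p: "0 < pl" "pl < ph" "ph < 1"
    and X_range: "\<And>t \<omega>. t \<in> {1,2} \<Longrightarrow> \<omega> \<in> space M \<Longrightarrow> X t \<omega> \<in> \<X>"
    \<comment> \<open>Assumption 1\<close>
    and U_meas: "\<And>t x. t \<in> {1,2} \<Longrightarrow> U t x \<in> borel_measurable M"
    and Y_def: "\<And>t \<omega>. t \<in> {1,2} \<Longrightarrow> \<omega> \<in> space M \<Longrightarrow> Y t \<omega> = g t (U t (X t \<omega>) \<omega>)"
    and Y_meas: "\<And>t. t \<in> {1,2} \<Longrightarrow> Y t \<in> borel_measurable M"
    and A1: "\<And>x. x \<in> \<X> \<Longrightarrow>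
        distr M borel (\<lambda>\<omega>. (U 1 x \<omega>, pop_cdf M (X 1) (X 1 \<omega>)))
      = distr M borel (\<lambda>\<omega>. (U 2 x \<omega>, pop_cdf M (X 2) (X 2 \<omega>)))"
    \<comment> \<open>Assumption 5\<close>
    and A5_meas: "\<And>t i. t \<in> {1,2} \<Longrightarrow> Xs t i \<in> borel_measurable M \<and> Ys t i \<in> borel_measurable M"
    and A5_indep: "prob_space.indep_vars M (\<lambda>_. borel)
        (\<lambda>(t,i) \<omega>. (Ys t i \<omega>, Xs t i \<omega>)) ({1,2} \<times> UNIV)"
    and A5_ident: "\<And>t i. t \<in> {1,2} \<Longrightarrow>
        distr M borel (\<lambda>\<omega>. (Ys t i \<omega>, Xs t i \<omega>)) = distr M borel (\<lambda>\<omega>. (Y t \<omega>, X t \<omega>))"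
    \<comment> \<open>Assumption 6 (i)\<close>
    and A6_cross: "pop_cdf M (X 1) xs = pop_cdf M (X 2) xs"
      "0 < pop_cdf M (X 1) xs" "pop_cdf M (X 1) xs < 1"
    and A6_unique: "\<And>x. pop_cdf M (X 1) x = pop_cdf M (X 2) x \<Longrightarrow>
        0 < pop_cdf M (X 1) x \<Longrightarrow> pop_cdf M (X 1) x < 1 \<Longrightarrow> x = xs"
    and A6_p: "pl < pop_cdf M (X 1) xs" "pop_cdf M (X 1) xs < ph"
    \<comment> \<open>Assumption 6 (ii)\<close>
    and A6_dens: "\<And>t. t \<in> {1,2} \<Longrightarrow> distributed M lborel (X t) (\<lambda>x. ennreal (f t x))"
    and A6_cont: "\<And>t. t \<in> {1,2} \<Longrightarrow> continuous_on UNIV (f t)"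
    and A6_nonneg: "\<And>t x. t \<in> {1,2} \<Longrightarrow> 0 \<le> f t x"
    and A6_pos: "\<And>t x. t \<in> {1,2} \<Longrightarrow> x \<in> interior \<X> \<Longrightarrow> f t x > 0"
    and A6_neq: "f 1 xs \<noteq> f 2 xs"
  shows "bounded_in_prob M
           (\<lambda>n \<omega>. sqrt (real n) * (xhat_star (Xs 1) (Xs 2) pl ph n \<omega> - xs))"
proof -
  interpret P: prob_space M by (rule M)
  have t1: "(1::nat) \<in> {1,2}" and t2: "(2::nat) \<in> {1,2}" by auto
  define F1 where "F1 = pop_cdf M (X 1)"
  define F2 where "F2 = pop_cdf M (X 2)"
  have Xm1: "X 1 \<in> borel_measurable M" using A6_dens[OF t1] unfolding distributed_def by simp
  have Xm2: "X 2 \<in> borel_measurable M" using A6_dens[OF t2] unfolding distributed_def by simp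
  have cF1: "continuous_on UNIV F1" unfolding F1_def
    by (rule pop_cdf_cont[OF M A6_dens[OF t1] A6_nonneg[OF t1] A6_cont[OF t1]])
  have cF2: "continuous_on UNIV F2" unfolding F2_def
    by (rule pop_cdf_cont[OF M A6_dens[OF t2] A6_nonneg[OF t2] A6_cont[OF t2]])
  have mF1: "F1 x \<le> F1 y" if "x \<le> y" for x y unfolding F1_def by (rule pop_cdf_mono[OF M Xm1 that])
  have mF2: "F2 x \<le> F2 y" if "x \<le> y" for x y unfolding F2_def by (rule pop_cdf_mono[OF M Xm2 that])
  have F0: "F1 xs = F2 xs" using A6_cross(1) unfolding F1_def F2_def .
  have Fxs: "pl < F1 xs" "F1 xs < ph" using A6_p unfolding F1_def by auto
  have lim1: "(F1 \<longlongrightarrow> 0) at_bot" "(F1 \<longlongrightarrow> 1) at_top"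
    unfolding F1_def using pop_cdf_lims[OF M Xm1] by auto
  define pA where "pA = pl / 3"
  define qA where "qA = (1 - ph) / 3"
  have pA: "pA > 0" "pl = 3 * pA" unfolding pA_def using p by auto
  have qA: "qA > 0" "1 = ph + 3 * qA" unfolding qA_def using p by (auto simp: field_simps)
  obtain a where a: "F1 a < pA"
  proof -
    have "eventually (\<lambda>x. F1 x < pA) at_bot" using pA by (intro order_tendstoD(2)[OF lim1(1)]) linarith
    then obtain N where "\<forall>x\<le>N. F1 x < pA" unfolding eventually_at_bot_linorder by blast
    then show ?thesis using that by blast
  qed
  obtain b where b: "ph + 2 * qA < F1 b"
  proof -
    have "eventually (\<lambda>x. ph + 2 * qA < F1 x) at_top" using qA by (intro order_tendstoD(1)[OF lim1(2)]) linarith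
    then obtain N where "\<forall>x\<ge>N. ph + 2 * qA < F1 x" unfolding eventually_at_top_linorder by blast
    then show ?thesis using that by blast
  qed
  define a' where "a' = min a xs"
  define b' where "b' = max b xs"
  have a'1: "a' \<le> xs" "F1 a' < pA" using a mF1[of a' a] unfolding a'_def by auto
  have b'1: "xs \<le> b'" "ph + 2 * qA < F1 b'" using b mF1[of b b'] unfolding b'_def by auto
  have cI: "continuous_on {u..v} F1" for u v by (rule continuous_on_subset[OF cF1]) auto
  have iv1: "\<exists>x. a' \<le> x \<and> x \<le> xs \<and> F1 x = y" if "F1 a' \<le> y" "y \<le> F1 xs" for y
    by (rule IVT'[OF that a'1(1) cI])
  have iv2: "\<exists>x. xs \<le> x \<and> x \<le> b' \<and> F1 x = y" if "F1 xs \<le> y" "y \<le> F1 b'" for y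
    by (rule IVT'[OF that b'1(1) cI])
  obtain L0 where L0: "F1 L0 = pA" "L0 \<le> xs"
    using iv1[of "pA"] a'1(2) Fxs pA by auto
  obtain L where L: "F1 L = 2 * pA" "L \<le> xs"
    using iv1[of "2 * pA"] a'1(2) Fxs pA by auto
  obtain R where R: "F1 R = ph + qA" "xs \<le> R"
    using iv2[of "ph + qA"] b'1(2) Fxs qA by auto
  obtain R0 where R0: "F1 R0 = ph + 2 * qA" "xs \<le> R0"
    using iv2[of "ph + 2 * qA"] b'1(2) Fxs qA by auto
  have L0L: "L0 < L" using mF1[of L L0] L0 L pA by (cases "L \<le> L0") auto
  have Lxs: "L < xs" using mF1[of xs L] L Fxs pA by (cases "xs \<le> L") auto
  have xsR: "xs < R" using mF1[of R xs] R Fxs qA by (cases "R \<le> xs") auto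
  have RR0: "R < R0" using mF1[of R0 R] R R0 qA by (cases "R0 \<le> R") auto
  obtain B1 where B1: "B1 \<ge> 0" "\<forall>u v. L0 \<le> u \<longrightarrow> u \<le> v \<longrightarrow> v \<le> R0 \<longrightarrow> F1 v - F1 u \<le> B1 * (v - u)"
    unfolding F1_def using pop_cdf_lip[OF M A6_dens[OF t1] A6_nonneg[OF t1] A6_cont[OF t1]] by blast
  obtain B2 where B2: "B2 \<ge> 0" "\<forall>u v. L0 \<le> u \<longrightarrow> u \<le> v \<longrightarrow> v \<le> R0 \<longrightarrow> F2 v - F2 u \<le> B2 * (v - u)"
    unfolding F2_def using pop_cdf_lip[OF M A6_dens[OF t2] A6_nonneg[OF t2] A6_cont[OF t2]] by blast
  define B where "B = max B1 B2"
  have B: "B \<ge> 0" using B1 B2 B_def by auto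
  have LipB: "F1 v - F1 u \<le> B * (v - u)" "F2 v - F2 u \<le> B * (v - u)"
    if "L0 \<le> u" "u \<le> v" "v \<le> R0" for u v
  proof -
    have "B1 * (v - u) \<le> B * (v - u)" "B2 * (v - u) \<le> B * (v - u)"
      unfolding B_def using that by (intro mult_right_mono; simp)+
    then show "F1 v - F1 u \<le> B * (v - u)" "F2 v - F2 u \<le> B * (v - u)" using B1 B2 that by fastforce+
  qed
  obtain c1 \<delta> where c1: "c1 > 0" "\<delta> > 0" "\<And>x. \<bar>x - xs\<bar> \<le> \<delta> \<Longrightarrow> c1 * \<bar>x - xs\<bar> \<le> \<bar>F2 x - F1 x\<bar>"
  proof (cases "f 1 xs < f 2 xs")
    case True
    obtain \<delta> where d: "\<delta> > 0" "\<forall>x. \<bar>x - xs\<bar> \<le> \<delta> \<longrightarrow> (f 2 xs - f 1 xs) / 2 * \<bar>x - xs\<bar>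
        \<le> \<bar>(pop_cdf M (X 2) x - pop_cdf M (X 1) x) - (pop_cdf M (X 2) xs - pop_cdf M (X 1) xs)\<bar>"
      using local_sep[OF M A6_dens[OF t2] A6_dens[OF t1] A6_nonneg[OF t2] A6_nonneg[OF t1]
          A6_cont[OF t2] A6_cont[OF t1] True] by blast
    show ?thesis
      by (rule that[of "(f 2 xs - f 1 xs) / 2" \<delta>]) (use True d F0 in \<open>auto simp: F1_def F2_def\<close>)
  next
    case False
    then have gt: "f 1 xs > f 2 xs" using A6_neq by auto
    obtain \<delta> where d: "\<delta> > 0" "\<forall>x. \<bar>x - xs\<bar> \<le> \<delta> \<longrightarrow> (f 1 xs - f 2 xs) / 2 * \<bar>x - xs\<bar>
        \<le> \<bar>(pop_cdf M (X 1) x - pop_cdf M (X 2) x) - (pop_cdf M (X 1) xs - pop_cdf M (X 2) xs)\<bar>"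
      using local_sep[OF M A6_dens[OF t1] A6_dens[OF t2] A6_nonneg[OF t1] A6_nonneg[OF t2]
          A6_cont[OF t1] A6_cont[OF t2] gt] by blast
    have "(f 1 xs - f 2 xs) / 2 * \<bar>x - xs\<bar> \<le> \<bar>F2 x - F1 x\<bar>" if "\<bar>x - xs\<bar> \<le> \<delta>" for x
      using d(2) that F0 unfolding F1_def F2_def by (simp add: abs_minus_commute)
    then show ?thesis
      by (intro that[of "(f 1 xs - f 2 xs) / 2" \<delta>]) (use gt d in auto)
  qed
  have F1range: "0 < F1 x \<and> F1 x < 1" if "x \<in> {L0..R0}" for x
    using mF1[of L0 x] mF1[of x R0] that L0 R0 pA qA by auto
  obtain c where c: "c > 0" "\<forall>u\<in>{L0..R0}. c * \<bar>u - xs\<bar> \<le> \<bar>F2 u - F1 u\<bar>"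
  proof -
    have "\<exists>c>0. \<forall>u\<in>{L0..R0}. c * \<bar>u - xs\<bar> \<le> \<bar>(\<lambda>x. F2 x - F1 x) u\<bar>"
    proof (rule sep_global[where P="\<lambda>x. F2 x - F1 x"])
      show "continuous_on UNIV (\<lambda>x. F2 x - F1 x)" by (intro continuous_on_diff cF1 cF2)
      show "(\<lambda>x. F2 x - F1 x) xs = 0" using F0 by simp
      show "L0 < xs" "xs < R0" using L0L Lxs xsR RR0 by auto
      show "\<And>x. \<bar>x - xs\<bar> \<le> \<delta> \<Longrightarrow> c1 * \<bar>x - xs\<bar> \<le> \<bar>(\<lambda>x. F2 x - F1 x) x\<bar>" using c1 by simp
      show "x = xs" if "x \<in> {L0..R0}" "(\<lambda>x. F2 x - F1 x) x = 0" for x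
        using A6_unique[of x] F1range[OF that(1)] that(2) unfolding F1_def F2_def by auto
    qed (use c1 in auto)
    then show ?thesis using that by auto
  qed
  show ?thesis
    unfolding bounded_in_prob_def
  proof (intro allI impI)
    fix \<epsilon> :: real assume \<epsilon>: "\<epsilon> > 0"
    define m where "m = max 1 (8 * B / c)"
    define \<kappa> where "\<kappa> = c / 8"
    define Aa where "Aa = m + 64 / \<epsilon> + 1"
    define K where "K = sqrt Aa / \<kappa>"
    define \<gamma> where "\<gamma> = min pA qA"
    define \<gamma>' where "\<gamma>' = min (F1 xs - pl) (ph - F1 xs)"
    define \<rho> where "\<rho> = min (\<gamma>'/\<kappa>) (min (m * (L - L0)) (m * (R0 - R)))"
    have m1: "m \<ge> 1" unfolding m_def by simp
    have mB: "B \<le> m * (c / 8)"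
    proof -
      have "8 * B / c \<le> m" unfolding m_def by simp
      then have "8 * B \<le> m * c" using c(1) by (simp add: field_simps)
      then show ?thesis by simp
    qed
    have \<kappa>: "\<kappa> > 0" unfolding \<kappa>_def using c(1) by simp
    have e64: "64 / \<epsilon> > 0" using \<epsilon> by simp
    have Aa: "Aa > 0" "m \<le> Aa" "64 / \<epsilon> < Aa" unfolding Aa_def using m1 e64 by linarith+
    have K: "K > 0" unfolding K_def using Aa \<kappa> by simp
    have KK: "\<kappa>\<^sup>2 * K\<^sup>2 = Aa" unfolding K_def using Aa \<kappa> by (simp add: power_divide)
    have \<gamma>: "\<gamma> > 0" unfolding \<gamma>_def using pA qA by simp
    have \<gamma>': "\<gamma>' > 0" unfolding \<gamma>'_def using Fxs by simp
    have \<rho>: "\<rho> > 0" unfolding \<rho>_def using \<gamma>' \<kappa> m1 L0L RR0 by simp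
    obtain N :: nat where N: "max ((K/\<rho>)\<^sup>2) (4/(\<epsilon>*\<gamma>\<^sup>2)) + 1 \<le> real N" using real_arch_simple by blast
    show "\<exists>K N. \<forall>n\<ge>N. \<exists>A\<in>sets M. {\<omega> \<in> space M. K < \<bar>sqrt (real n) * (xhat_star (Xs 1) (Xs 2) pl ph n \<omega> - xs)\<bar>} \<subseteq> A \<and> measure M A < \<epsilon>"
    proof (intro exI[of _ K] exI[of _ N] allI impI)
      fix n :: nat assume nN: "N \<le> n"
      have nbig: "max ((K/\<rho>)\<^sup>2) (4/(\<epsilon>*\<gamma>\<^sup>2)) + 1 \<le> real n" using N nN by (meson of_nat_le_iff order_trans)
      have n1: "real n \<ge> 1" using nbig by (smt (verit) zero_le_power2 max.cobounded1)
      have npos: "n > 0" using n1 by simp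
      have n2: "(K/\<rho>)\<^sup>2 \<le> real n" "4/(\<epsilon>*\<gamma>\<^sup>2) + 1 \<le> real n" using nbig by auto
      define r0 where "r0 = K / sqrt (real n)"
      define h where "h = r0 / m"
      have sqn: "sqrt (real n) > 0" using npos by simp
      have r0: "r0 > 0" unfolding r0_def using K sqn by simp
      have h: "h > 0" unfolding h_def using r0 m1 by simp
      have r0\<rho>: "r0 \<le> \<rho>"
      proof -
        have "K / \<rho> = sqrt ((K/\<rho>)\<^sup>2)" using K \<rho> by simp
        also have "\<dots> \<le> sqrt (real n)" using n2(1) by (rule real_sqrt_le_mono)
        finally have "K \<le> \<rho> * sqrt (real n)" using \<rho> by (simp add: field_simps)
        then show ?thesis unfolding r0_def using sqn by (simp add: field_simps)
      qed
      have nr0: "real n * r0\<^sup>2 = K\<^sup>2" unfolding r0_def using npos by (simp add: power_divide)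
      have aeq: "\<kappa>\<^sup>2 * (real n * r0\<^sup>2) = Aa" using nr0 KK by simp
      have \<kappa>r0: "\<kappa> * r0 \<le> \<gamma>'"
      proof -
        have "r0 \<le> \<gamma>' / \<kappa>" using r0\<rho> unfolding \<rho>_def by simp
        then show ?thesis using \<kappa> by (simp add: field_simps)
      qed
      have hL: "h \<le> L - L0" and hR: "h \<le> R0 - R"
      proof -
        have "r0 \<le> m * (L - L0)" "r0 \<le> m * (R0 - R)" using r0\<rho> unfolding \<rho>_def by auto
        then show "h \<le> L - L0" "h \<le> R0 - R" unfolding h_def using m1 by (simp_all add: field_simps)
      qed
      have Bh: "B * h \<le> c / 8 * r0"
      proof -
        have "B * h \<le> (m * (c / 8)) * h" using mB h by (intro mult_right_mono) auto
        also have "\<dots> = c / 8 * r0" unfolding h_def using m1 by simp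
        finally show ?thesis .
      qed
      define Ks where "Ks = {k::int. L0 \<le> xs + of_int k * h \<and> xs + of_int k * h \<le> R0}"
      have finKs: "finite Ks"
      proof (rule finite_subset)
        show "Ks \<subseteq> {\<lfloor>(L0 - xs) / h\<rfloor> .. \<lceil>(R0 - xs) / h\<rceil>}"
        proof
          fix k assume "k \<in> Ks"
          then have "(L0 - xs) / h \<le> of_int k" "of_int k \<le> (R0 - xs) / h"
            unfolding Ks_def using h by (auto simp: field_simps)
          then have "\<lfloor>(L0 - xs) / h\<rfloor> \<le> k" "k \<le> \<lceil>(R0 - xs) / h\<rceil>"
            by (metis floor_mono floor_of_int, metis ceiling_mono ceiling_of_int)
          then show "k \<in> {\<lfloor>(L0 - xs) / h\<rfloor> .. \<lceil>(R0 - xs) / h\<rceil>}" by simp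
        qed
      qed simp
      define e where "e = (\<lambda>k::int. \<kappa> * max (\<bar>of_int k\<bar> * h) r0)"
      have e0: "e k \<ge> 0" for k unfolding e_def using \<kappa> r0 by simp
      define Bad where "Bad = (\<lambda>(t,k). {\<omega> \<in> space M. \<bar>emp_cdf (Xs t) n \<omega> (xs + of_int k * h) - pop_cdf M (X t) (xs + of_int k * h)\<bar> \<ge> e k})"
      define BL where "BL = {\<omega> \<in> space M. \<bar>emp_cdf (Xs 1) n \<omega> L - pop_cdf M (X 1) L\<bar> \<ge> \<gamma>}"
      define BR where "BR = {\<omega> \<in> space M. \<bar>emp_cdf (Xs 1) n \<omega> R - pop_cdf M (X 1) R\<bar> \<ge> \<gamma>}"
      define Aset where "Aset = (\<Union>i\<in>{1,2}\<times>Ks. Bad i) \<union> BL \<union> BR"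
      have hoeff: "{\<omega> \<in> space M. \<bar>emp_cdf (Xs t) n \<omega> u - pop_cdf M (X t) u\<bar> \<ge> ee} \<in> sets M \<and>
          measure M {\<omega> \<in> space M. \<bar>emp_cdf (Xs t) n \<omega> u - pop_cdf M (X t) u\<bar> \<ge> ee} \<le> 2 * exp (-2 * real n * ee\<^sup>2)"
        if tt: "t \<in> {1,2}" and ee: "ee \<ge> 0" for t u ee
      proof -
        have Xmt: "X t \<in> borel_measurable M" using A6_dens[OF tt] unfolding distributed_def by simp
        show ?thesis
          by (rule emp_cdf_hoeffding[where M=M and Xs=Xs and Ys=Ys and X=X and Y=Y and t=t and n=n and e=ee and u=u, OF M A5_meas[OF tt] A5_indep A5_ident[OF tt] tt Xmt Y_meas[OF tt] npos ee])
      qed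
      have Bad_sets: "Bad i \<in> sets M" if "i \<in> {1,2}\<times>Ks" for i
        using that hoeff[OF _ e0] unfolding Bad_def by auto
      have BL_sets: "BL \<in> sets M" unfolding BL_def using hoeff[OF t1, of \<gamma> L] \<gamma> by auto
      have BR_sets: "BR \<in> sets M" unfolding BR_def using hoeff[OF t1, of \<gamma> R] \<gamma> by auto
      have Aset_sets: "Aset \<in> sets M" unfolding Aset_def using Bad_sets BL_sets BR_sets finKs
        by (intro sets.Un sets.finite_UN) auto
      have q: "0 \<le> exp (-1::real)" "exp (-1::real) \<le> 1/2" using exp_m1_half by auto
      have mBad: "measure M (Bad (t,k)) \<le> 2 * exp (- Aa) * exp (-1) ^ nat \<bar>k\<bar>" if tt: "t \<in> {1,2}" for t k
      proof -
        have "measure M (Bad (t,k)) \<le> 2 * exp (-2 * real n * (e k)\<^sup>2)"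
          using hoeff[OF tt e0[of k], of "xs + of_int k * h"] unfolding Bad_def by simp
        also have "exp (-2 * real n * (e k)\<^sup>2) \<le> exp (- (Aa + \<bar>of_int k\<bar>))"
        proof -
          have "\<kappa>\<^sup>2 * (real n * r0\<^sup>2) + \<bar>of_int k\<bar> \<le> 2 * real n * (\<kappa> * max (\<bar>of_int k\<bar> * h) r0)\<^sup>2"
            by (rule exp_term_arith) (use \<kappa> r0 m1 Aa aeq in \<open>auto simp: h_def\<close>)
          then show ?thesis unfolding e_def aeq by simp
        qed
        also have "exp (- (Aa + \<bar>of_int k\<bar>)) = exp (- Aa) * exp (-1) ^ nat \<bar>k\<bar>"
          by (simp add: exp_add[symmetric] exp_int_pow[symmetric])
        finally show ?thesis by simp
      qed
      have sumBad: "(\<Sum>i\<in>{1,2}\<times>Ks. measure M (Bad i)) \<le> 16 * exp (- Aa)"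
      proof -
        have "(\<Sum>i\<in>{1,2}\<times>Ks. measure M (Bad i)) \<le> (\<Sum>i\<in>{1::nat,2}\<times>Ks. 2 * exp (- Aa) * exp (-1) ^ nat \<bar>snd i\<bar>)"
          by (intro sum_mono) (use mBad in auto)
        also have "\<dots> = (\<Sum>t\<in>{1::nat,2}. \<Sum>k\<in>Ks. 2 * exp (- Aa) * exp (-1) ^ nat \<bar>k\<bar>)"
          by (subst sum.cartesian_product) (simp add: case_prod_beta)
        also have "\<dots> = 2 * (2 * exp (- Aa) * (\<Sum>k\<in>Ks. exp (-1) ^ nat \<bar>k\<bar>))"
          by (simp add: sum_distrib_left)
        also have "\<dots> \<le> 2 * (2 * exp (- Aa) * 4)"
          using geom_int_sum[OF finKs q] by (intro mult_left_mono) auto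
        finally show ?thesis by simp
      qed
      have expA: "16 * exp (- Aa) < \<epsilon> / 4"
      proof -
        have "exp (- Aa) \<le> 1 / (1 + Aa)" using exp_le_inv[of Aa] Aa by simp
        also have "\<dots> < \<epsilon> / 64"
        proof -
          have "64 < \<epsilon> * (1 + Aa)" using Aa(3) \<epsilon> by (simp add: field_simps)
          then show ?thesis using Aa \<epsilon> by (simp add: field_simps)
        qed
        finally show ?thesis by simp
      qed
      have mLR: "measure M {\<omega> \<in> space M. \<bar>emp_cdf (Xs 1) n \<omega> u - pop_cdf M (X 1) u\<bar> \<ge> \<gamma>} < \<epsilon> / 4" for u
      proof -
        have "measure M {\<omega> \<in> space M. \<bar>emp_cdf (Xs 1) n \<omega> u - pop_cdf M (X 1) u\<bar> \<ge> \<gamma>} \<le> 2 * exp (- (2 * real n * \<gamma>\<^sup>2))"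
          using hoeff[OF t1, of \<gamma> u] \<gamma> by simp
        also have "\<dots> \<le> 2 * (1 / (1 + 2 * real n * \<gamma>\<^sup>2))"
          using exp_le_inv[of "2 * real n * \<gamma>\<^sup>2"] by simp
        also have "\<dots> < \<epsilon> / 4"
        proof -
          have "4 / (\<epsilon> * \<gamma>\<^sup>2) < real n" using n2(2) by simp
          then have "4 < real n * (\<epsilon> * \<gamma>\<^sup>2)" using \<epsilon> \<gamma> by (simp add: field_simps)
          then have h8: "8 < \<epsilon> * (1 + 2 * real n * \<gamma>\<^sup>2)" using \<epsilon> by (simp add: algebra_simps)
          have dpos: "0 < 1 + 2 * real n * \<gamma>\<^sup>2" using \<gamma> by (simp add: add_pos_nonneg)
          have "2 / (1 + 2 * real n * \<gamma>\<^sup>2) < \<epsilon> / 4"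
            by (subst pos_divide_less_eq[OF dpos]) (use h8 in linarith)
          then show ?thesis by simp
        qed
        finally show ?thesis .
      qed
      have mAset: "measure M Aset < \<epsilon>"
      proof -
        have "measure M Aset \<le> measure M ((\<Union>i\<in>{1,2}\<times>Ks. Bad i) \<union> BL) + measure M BR"
          unfolding Aset_def using Bad_sets BL_sets BR_sets finKs
          by (intro measure_Un_le) auto
        also have "measure M ((\<Union>i\<in>{1,2}\<times>Ks. Bad i) \<union> BL) \<le> measure M (\<Union>i\<in>{1,2}\<times>Ks. Bad i) + measure M BL"
          using Bad_sets BL_sets finKs by (intro measure_Un_le) auto
        also have "measure M (\<Union>i\<in>{1,2}\<times>Ks. Bad i) \<le> (\<Sum>i\<in>{1,2}\<times>Ks. measure M (Bad i))"
          using Bad_sets finKs by (intro P.finite_measure_subadditive_finite) auto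
        finally have "measure M Aset \<le> (\<Sum>i\<in>{1,2}\<times>Ks. measure M (Bad i)) + measure M BL + measure M BR"
          by simp
        moreover have "measure M BL < \<epsilon> / 4" "measure M BR < \<epsilon> / 4" unfolding BL_def BR_def by (rule mLR)+
        ultimately show ?thesis using sumBad expA \<epsilon> by linarith
      qed
      have incl: "{\<omega> \<in> space M. K < \<bar>sqrt (real n) * (xhat_star (Xs 1) (Xs 2) pl ph n \<omega> - xs)\<bar>} \<subseteq> Aset"
      proof
        fix \<omega> assume \<omega>: "\<omega> \<in> {\<omega> \<in> space M. K < \<bar>sqrt (real n) * (xhat_star (Xs 1) (Xs 2) pl ph n \<omega> - xs)\<bar>}"
        show "\<omega> \<in> Aset"
        proof (rule ccontr)
          assume nA: "\<omega> \<notin> Aset"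
          have sp: "\<omega> \<in> space M" using \<omega> by simp
          define G1 where "G1 = emp_cdf (Xs 1) n \<omega>"
          define G2 where "G2 = emp_cdf (Xs 2) n \<omega>"
          define xh where "xh = xhat_star (Xs 1) (Xs 2) pl ph n \<omega>"
          have mG1: "mono G1" unfolding G1_def by (intro monoI emp_cdf_mono)
          have mG2: "mono G2" unfolding G2_def by (intro monoI emp_cdf_mono)
          have good1: "\<bar>G1 (xs + of_int k * h) - F1 (xs + of_int k * h)\<bar> \<le> e k" if "k \<in> Ks" for k
          proof -
            have "\<omega> \<notin> Bad (1,k)" using nA that unfolding Aset_def by auto
            then show ?thesis using sp unfolding Bad_def G1_def F1_def by auto
          qed
          have good2: "\<bar>G2 (xs + of_int k * h) - F2 (xs + of_int k * h)\<bar> \<le> e k" if "k \<in> Ks" for k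
          proof -
            have "\<omega> \<notin> Bad (2,k)" using nA that unfolding Aset_def by auto
            then show ?thesis using sp unfolding Bad_def G2_def F2_def by auto
          qed
          have gL: "\<bar>G1 L - F1 L\<bar> < \<gamma>" using nA sp unfolding Aset_def BL_def G1_def F1_def by auto
          have gR: "\<bar>G1 R - F1 R\<bar> < \<gamma>" using nA sp unfolding Aset_def BR_def G1_def F1_def by auto
          have K0: "0 \<in> Ks" unfolding Ks_def using L0L Lxs xsR RR0 by simp
          have e0r: "e 0 = c / 8 * r0" unfolding e_def \<kappa>_def using r0 by simp
          have g10: "\<bar>G1 xs - F1 xs\<bar> \<le> c / 8 * r0" using good1[OF K0] e0r by simp
          have g20: "\<bar>G2 xs - F2 xs\<bar> \<le> c / 8 * r0" using good2[OF K0] e0r by simp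
          have g10s: "\<bar>G1 xs - F1 xs\<bar> < c / 8 * r0"
          proof -
            have "\<omega> \<notin> Bad (1,0)" using nA K0 unfolding Aset_def by auto
            then show ?thesis using sp e0r unfolding Bad_def G1_def F1_def by auto
          qed
          have G1xs: "pl \<le> G1 xs" "G1 xs < ph"
          proof -
            have a: "c / 8 * r0 \<le> \<gamma>'" using \<kappa>r0 unfolding \<kappa>_def .
            have b: "\<gamma>' \<le> F1 xs - pl" "\<gamma>' \<le> ph - F1 xs" unfolding \<gamma>'_def by auto
            have d: "G1 xs - F1 xs < c / 8 * r0" "F1 xs - G1 xs < c / 8 * r0" using g10s unfolding abs_less_iff by linarith+
            show "pl \<le> G1 xs" "G1 xs < ph" using a b d by linarith+
          qed
          have G1L: "G1 L < pl"
          proof -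
            have "\<gamma> \<le> pA" unfolding \<gamma>_def by simp
            moreover have "G1 L - F1 L < \<gamma>" using gL unfolding abs_less_iff by linarith
            ultimately show ?thesis using L(1) pA(2) by linarith
          qed
          have G1R: "ph \<le> G1 R"
          proof -
            have "\<gamma> \<le> qA" unfolding \<gamma>_def by simp
            moreover have "F1 R - G1 R < \<gamma>" using gR unfolding abs_less_iff by linarith
            ultimately show ?thesis using R(1) by linarith
          qed
          define ql where "ql = emp_quantile (Xs 1) n \<omega> pl"
          define qh where "qh = emp_quantile (Xs 1) n \<omega> ph"
          have G1R': "ph \<le> emp_cdf (Xs 1) n \<omega> R" using G1R unfolding G1_def .
          have G1xs': "pl \<le> emp_cdf (Xs 1) n \<omega> xs" using G1xs(1) unfolding G1_def .
          have ph0: "0 < ph" using p by linarith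
          have ql_xs: "ql \<le> xs" unfolding ql_def by (rule emp_quantile_le[OF npos p(1) G1xs'])
          have qh_R: "qh \<le> R" unfolding qh_def by (rule emp_quantile_le[OF npos ph0 G1R'])
          have xs_qh: "xs \<le> qh" unfolding qh_def
          proof (rule emp_quantile_ge[OF _ G1R'])
            fix x assume x: "x < xs"
            have "G1 x \<le> G1 xs" using monoD[OF mG1, of x xs] x by simp
            then show "emp_cdf (Xs 1) n \<omega> x < ph" using G1xs(2) unfolding G1_def by linarith
          qed
          have L_ql: "L \<le> ql" unfolding ql_def
          proof (rule emp_quantile_ge[OF _ G1xs'])
            fix x assume x: "x < L"
            have "G1 x \<le> G1 L" using monoD[OF mG1, of x L] x by simp
            then show "emp_cdf (Xs 1) n \<omega> x < pl" using G1L unfolding G1_def by linarith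
          qed
          have qlqh: "emp_quantile (Xs 1) n \<omega> pl \<le> emp_quantile (Xs 1) n \<omega> ph"
            using ql_xs xs_qh unfolding ql_def qh_def by linarith
          have xp: "xh \<in> {ql..qh} \<and> (\<forall>x'\<in>{ql..qh}. \<bar>G2 xh - G1 xh\<bar> \<le> \<bar>G2 x' - G1 x'\<bar>)"
            unfolding xh_def G1_def G2_def ql_def qh_def
            by (rule xhat_props[OF qlqh])
          have xhLR: "L \<le> xh" "xh \<le> R" using xp L_ql qh_R by auto
          have xhmin: "\<bar>G2 xh - G1 xh\<bar> \<le> \<bar>G2 xs - G1 xs\<bar>" using xp ql_xs xs_qh by auto
          have close: "\<bar>xh - xs\<bar> \<le> r0"
          proof (rule ccontr)
            assume far: "\<not> \<bar>xh - xs\<bar> \<le> r0"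
            define k where "k = \<lfloor>(xh - xs) / h\<rfloor>"
            define u where "u = xs + of_int k * h"
            define v where "v = xs + of_int (k + 1) * h"
            have k1: "of_int k \<le> (xh - xs) / h" "(xh - xs) / h < of_int k + 1" unfolding k_def by linarith+
            have ux: "u \<le> xh" using k1(1) h unfolding u_def by (simp add: field_simps)
            have xv: "xh \<le> v" using k1(2) h unfolding v_def by (simp add: field_simps)
            have vu: "v - u = h" unfolding u_def v_def by (simp add: algebra_simps)
            have uR: "L0 \<le> u" "u \<le> R0" "L0 \<le> v" "v \<le> R0" using ux xv vu xhLR hL hR L0L RR0 by linarith+
            have kK: "k \<in> Ks" "k + 1 \<in> Ks" unfolding Ks_def using uR unfolding u_def v_def by auto
            have "\<bar>G2 xs - G1 xs\<bar> < \<bar>G2 xh - G1 xh\<bar>"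
            proof (rule det_bound[OF mG1 mG2 h r0 c(1) u_def v_def ux xv])
              have uv: "u \<le> v" using vu h by linarith
              show "F1 v - F1 u \<le> B * h" "F2 v - F2 u \<le> B * h" using LipB[OF uR(1) uv uR(4)] vu by simp_all
              show "B * h \<le> c / 8 * r0" by (rule Bh)
              show "c * \<bar>u - xs\<bar> \<le> \<bar>F2 u - F1 u\<bar>" "c * \<bar>v - xs\<bar> \<le> \<bar>F2 v - F1 v\<bar>" using c(2) uR by auto
              show "\<bar>G1 u - F1 u\<bar> \<le> c / 8 * max (\<bar>of_int k\<bar> * h) r0"
                using good1[OF kK(1)] unfolding u_def e_def \<kappa>_def .
              show "\<bar>G2 u - F2 u\<bar> \<le> c / 8 * max (\<bar>of_int k\<bar> * h) r0"
                using good2[OF kK(1)] unfolding u_def e_def \<kappa>_def .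
              show "\<bar>G1 v - F1 v\<bar> \<le> c / 8 * max (\<bar>of_int (k + 1)\<bar> * h) r0"
                using good1[OF kK(2)] unfolding v_def e_def \<kappa>_def .
              show "\<bar>G2 v - F2 v\<bar> \<le> c / 8 * max (\<bar>of_int (k + 1)\<bar> * h) r0"
                using good2[OF kK(2)] unfolding v_def e_def \<kappa>_def .
              show "\<bar>G1 xs - F1 xs\<bar> \<le> c / 8 * r0" by (rule g10)
              show "\<bar>G2 xs - F2 xs\<bar> \<le> c / 8 * r0" by (rule g20)
              show "F1 xs = F2 xs" by (rule F0)
              show "r0 < \<bar>xh - xs\<bar>" using far by simp
            qed
            then show False using xhmin by simp
          qed
          have "\<bar>sqrt (real n) * (xh - xs)\<bar> = sqrt (real n) * \<bar>xh - xs\<bar>" by (simp add: abs_mult)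
          also have "\<dots> \<le> sqrt (real n) * r0" using close sqn by (intro mult_left_mono) auto
          also have "\<dots> = K" unfolding r0_def using sqn by simp
          finally show False using \<omega> unfolding xh_def by simp
        qed
      qed
      show "\<exists>A\<in>sets M. {\<omega> \<in> space M. K < \<bar>sqrt (real n) * (xhat_star (Xs 1) (Xs 2) pl ph n \<omega> - xs)\<bar>} \<subseteq> A \<and> measure M A < \<epsilon>"
        using incl mAset Aset_sets by blast
    qed
  qed
qed

end
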